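(* Let $G$ be a finitely generated group and $\mathcal H$ a collection of subgroups forming a tight algebraic network inside $G$, and let $G_1$ be the finite-index subgroup of $G$ generated by the subgroups in $\mathcal H$. Then (with respect to a word metric) $G$ is a $(\tau,\eta)$-tight network, for some $\tau,\eta\ge0$, with respect to the collection of left cosets $\mathcal L=\{gH: g\in G_1,\ H\in\mathcal H\}$.
   Context: $G$ carries a word metric for a finite generating set. $\mathcal N_R(A)$ is the open $R$-neighborhood, $B(x,R)$ the open ball. A $(\lambda,\kappa)$-quasi-geodesic is a map $q$ from a connected subset of $\mathbb R$ with $\frac1\lambda|s-t|-\kappa\le\mathrm{dist}(q(s),q(t))\le\lambda|s-t|+\kappa$. A subset $A$ is $(C,L)$-quasi-convex if any two of its points are joined by an $(L,L)$-quasi-geodesic in $\mathcal N_C(A)$, and $M$-quasi-convex means $(M,M)$-quasi-convex; $A$ is $C$-path connected if any two of its points are joined by a path in $\mathcal N_C(A)$. Tight algebraic network: $G$ is an $M$-tight algebraic network with respect to $\mathcal H$ (and $\mathcal H$ forms a tight algebraic network inside $G$ if this holds for some $M$) if $\mathcal H$ is a collection of $M$-quasi-convex subgroups whose union generates a finite-index subgroup of $G$, and for any $H,H'\in\mathcal H$ there is a finite sequence $H=H_1,\dots,H_k=H'$ in $\mathcal H$ with each $H_i\cap H_{i+1}$ infinite and $M$-path connected. Tight network: a metric space $X$ is a $(\tau,\eta)$-tight network with respect to $\mathcal L$ if each $L\in\mathcal L$ is $(\tau,\eta)$-quasi-convex, $X=\bigcup_{L\in\mathcal L}\mathcal N_\tau(L)$,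 and for any $L,L'\in\mathcal L$ and any $x$ with $B(x,3\tau)$ meeting both $L$ and $L'$ there is a sequence $L=L_1,\dots,L_k=L'$ in $\mathcal L$, $k\le\eta$, with each $\mathcal N_\tau(L_i)\cap\mathcal N_\tau(L_{i+1})$ of infinite diameter, $\eta$-path connected and meeting $B(x,\eta)$. *)

theory Defs
  imports "HOL-Algebra.Algebra"
begin

definition word_length :: "('a, 'b) monoid_scheme \<Rightarrow> 'a set \<Rightarrow> 'a \<Rightarrow> nat" where
  "word_length G S g =
     (LEAST n. \<exists>ws. length ws = n \<and> set ws \<subseteq> S \<union> m_inv G ` S \<and>
                     foldr (\<lambda>a b. a \<otimes>\<^bsub>G\<^esub> b) ws \<one>\<^bsub>G\<^esub> = g)"

definition word_dist :: "('a, 'b) monoid_scheme \<Rightarrow> 'a set \<Rightarrow> 'a \<Rightarrow> 'a \<Rightarrow> real" where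
  "word_dist G S x y = real (word_length G S (inv\<^bsub>G\<^esub> x \<otimes>\<^bsub>G\<^esub> y))"

definition nbhd :: "('a \<Rightarrow> 'a \<Rightarrow> real) \<Rightarrow> 'a set \<Rightarrow> real \<Rightarrow> 'a set \<Rightarrow> 'a set" where
  "nbhd d Sp R A = {x \<in> Sp. \<exists>a \<in> A. d x a < R}"

definition oball :: "('a \<Rightarrow> 'a \<Rightarrow> real) \<Rightarrow> 'a set \<Rightarrow> 'a \<Rightarrow> real \<Rightarrow> 'a set" where
  "oball d Sp x R = {y \<in> Sp. d x y < R}"

definition quasi_geodesic ::
  "('a \<Rightarrow> 'a \<Rightarrow> real) \<Rightarrow> 'a set \<Rightarrow> real \<Rightarrow> real \<Rightarrow> real set \<Rightarrow> (real \<Rightarrow> 'a) \<Rightarrow> bool" where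
  "quasi_geodesic d Sp lam kap I q \<longleftrightarrow>
     connected I \<and> q ` I \<subseteq> Sp \<and>
     (\<forall>s\<in>I. \<forall>t\<in>I. \<bar>s - t\<bar> / lam - kap \<le> d (q s) (q t) \<and>
                   d (q s) (q t) \<le> lam * \<bar>s - t\<bar> + kap)"

definition quasi_convex ::
  "('a \<Rightarrow> 'a \<Rightarrow> real) \<Rightarrow> 'a set \<Rightarrow> real \<Rightarrow> real \<Rightarrow> 'a set \<Rightarrow> bool" where
  "quasi_convex d Sp C L A \<longleftrightarrow>
     (\<forall>x\<in>A. \<forall>y\<in>A. \<exists>a b q. a \<le> b \<and> quasi_geodesic d Sp L L {a..b} q \<and>
        q a = x \<and> q b = y \<and> q ` {a..b} \<subseteq> nbhd d Sp C A)"

text \<open>Paths in the (discrete) group with its word metric: sequences of points with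
  consecutive points at distance at most 1 (i.e. edge paths in the Cayley graph).\<close>
definition path_conn ::
  "('a \<Rightarrow> 'a \<Rightarrow> real) \<Rightarrow> 'a set \<Rightarrow> real \<Rightarrow> 'a set \<Rightarrow> bool" where
  "path_conn d Sp C A \<longleftrightarrow>
     (\<forall>x\<in>A. \<forall>y\<in>A. \<exists>ps. ps \<noteq> [] \<and> hd ps = x \<and> last ps = y \<and>
        set ps \<subseteq> nbhd d Sp C A \<and>
        (\<forall>i. Suc i < length ps \<longrightarrow> d (ps ! i) (ps ! Suc i) \<le> 1))"

definition infinite_diameter :: "('a \<Rightarrow> 'a \<Rightarrow> real) \<Rightarrow> 'a set \<Rightarrow> bool" where
  "infinite_diameter d A \<longleftrightarrow> \<not> (\<exists>B. \<forall>x\<in>A. \<forall>y\<in>A. d x y \<le> B)"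

definition tight_network ::
  "('a \<Rightarrow> 'a \<Rightarrow> real) \<Rightarrow> 'a set \<Rightarrow> real \<Rightarrow> real \<Rightarrow> 'a set set \<Rightarrow> bool" where
  "tight_network d Sp tau eta \<L> \<longleftrightarrow>
     (\<forall>L\<in>\<L>. quasi_convex d Sp tau eta L) \<and>
     Sp = (\<Union>L\<in>\<L>. nbhd d Sp tau L) \<and>
     (\<forall>L\<in>\<L>. \<forall>L'\<in>\<L>. \<forall>x\<in>Sp.
        oball d Sp x (3 * tau) \<inter> L \<noteq> {} \<and> oball d Sp x (3 * tau) \<inter> L' \<noteq> {} \<longrightarrow>
        (\<exists>Ls. Ls \<noteq> [] \<and> hd Ls = L \<and> last Ls = L' \<and> real (length Ls) \<le> eta \<and>
              set Ls \<subseteq> \<L> \<and>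
              (\<forall>i. Suc i < length Ls \<longrightarrow>
                 (let I = nbhd d Sp tau (Ls ! i) \<inter> nbhd d Sp tau (Ls ! Suc i) in
                    infinite_diameter d I \<and> path_conn d Sp eta I \<and>
                    I \<inter> oball d Sp x eta \<noteq> {}))))"

definition tight_alg_network ::
  "('a, 'b) monoid_scheme \<Rightarrow> 'a set \<Rightarrow> real \<Rightarrow> 'a set set \<Rightarrow> bool" where
  "tight_alg_network G S M \<H> \<longleftrightarrow>
     (\<forall>H\<in>\<H>. subgroup H G \<and> quasi_convex (word_dist G S) (carrier G) M M H) \<and>
     finite (rcosets\<^bsub>G\<^esub> (generate G (\<Union>\<H>))) \<and>
     (\<forall>H\<in>\<H>. \<forall>H'\<in>\<H>. \<exists>Hs. Hs \<noteq> [] \<and> hd Hs = H \<and> last Hs = H' \<and> set Hs \<subseteq> \<H> \<and>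
        (\<forall>i. Suc i < length Hs \<longrightarrow>
           infinite (Hs ! i \<inter> Hs ! Suc i) \<and>
           path_conn (word_dist G S) (carrier G) M (Hs ! i \<inter> Hs ! Suc i)))"

end

theory Submission
  imports Defs
begin



lemma uniform_bound:
  assumes "finite A" "\<forall>a\<in>A. \<exists>B::real. Q a B" "\<And>a B B'. Q a B \<Longrightarrow> B \<le> B' \<Longrightarrow> Q a B'"
  shows "\<exists>B. \<forall>a\<in>A. Q a B"
  using assms(1,2)
proof (induction A rule: finite_induct)
  case empty then show ?case by auto
next
  case (insert x F)
  then obtain B1 where B1: "\<forall>a\<in>F. Q a B1" by auto
  from insert obtain B2 where B2: "Q x B2" by auto
  have "\<forall>a\<in>insert x F. Q a (max B1 B2)"
    using B1 B2 assms(3) by (metis insert_iff max.cobounded1 max.cobounded2)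
  then show ?case by blast
qed

locale wm = group G for G (structure) +
  fixes S
  assumes finS: "finite S" and Ssub: "S \<subseteq> carrier G" and genS: "generate G S = carrier G"
begin

abbreviation "A \<equiv> S \<union> m_inv G ` S"
definition gprod :: "'a list \<Rightarrow> 'a" where "gprod ws = foldr (\<lambda>a b. a \<otimes> b) ws \<one>"
abbreviation "wl \<equiv> word_length G S"
abbreviation "d \<equiv> word_dist G S"

lemma A_carrier: "A \<subseteq> carrier G" using Ssub by auto
lemma finA: "finite A" using finS by auto

lemma gprod_Nil[simp]: "gprod [] = \<one>" by (simp add: gprod_def)
lemma gprod_Cons[simp]: "gprod (w # ws) = w \<otimes> gprod ws" by (simp add: gprod_def)

lemma gprod_closed: "set ws \<subseteq> carrier G \<Longrightarrow> gprod ws \<in> carrier G"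
  by (induction ws) auto

lemma gprod_append: "set xs \<subseteq> carrier G \<Longrightarrow> set ys \<subseteq> carrier G \<Longrightarrow>
   gprod (xs @ ys) = gprod xs \<otimes> gprod ys"
  by (induction xs) (auto simp: m_assoc gprod_closed)

lemma word_exists: "x \<in> carrier G \<Longrightarrow> \<exists>ws. set ws \<subseteq> A \<and> gprod ws = x"
proof -
  assume "x \<in> carrier G"
  then have "x \<in> generate G S" using genS by simp
  then show ?thesis
  proof (induction rule: generate.induct)
    case one then show ?case by (intro exI[of _ "[]"]) auto
  next
    case (incl h) then show ?case using Ssub by (intro exI[of _ "[h]"]) auto
  next
    case (inv h) then show ?case using Ssub by (intro exI[of _ "[inv h]"]) auto
  next
    case (eng h1 h2)
    then obtain w1 w2 where "set w1 \<subseteq> A" "gprod w1 = h1" "set w2 \<subseteq> A" "gprod w2 = h2" by blast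
    moreover have "set w1 \<subseteq> carrier G" "set w2 \<subseteq> carrier G" using calculation A_carrier by auto
    ultimately show ?case 
      by (intro exI[of _ "w1 @ w2"]) (auto simp: gprod_append)
  qed
qed

lemma wl_def': "wl x = (LEAST n. \<exists>ws. length ws = n \<and> set ws \<subseteq> A \<and> gprod ws = x)"
  unfolding word_length_def gprod_def by simp

lemma wl_le: "set ws \<subseteq> A \<Longrightarrow> wl (gprod ws) \<le> length ws"
  unfolding wl_def' by (rule Least_le) blast

lemma wl_word: "x \<in> carrier G \<Longrightarrow> \<exists>ws. set ws \<subseteq> A \<and> gprod ws = x \<and> length ws = wl x"
proof -
  assume "x \<in> carrier G"
  then obtain ws where "set ws \<subseteq> A" "gprod ws = x" using word_exists by blast
  then have "\<exists>n ws. length ws = n \<and> set ws \<subseteq> A \<and> gprod ws = x" by blast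
  from LeastI_ex[OF this] show ?thesis unfolding wl_def' by blast
qed

lemma wl_mult: "x \<in> carrier G \<Longrightarrow> y \<in> carrier G \<Longrightarrow> wl (x \<otimes> y) \<le> wl x + wl y"
proof -
  assume x: "x \<in> carrier G" and y: "y \<in> carrier G"
  obtain w1 where w1: "set w1 \<subseteq> A" "gprod w1 = x" "length w1 = wl x" using wl_word[OF x] by blast
  obtain w2 where w2: "set w2 \<subseteq> A" "gprod w2 = y" "length w2 = wl y" using wl_word[OF y] by blast
  have "set w1 \<subseteq> carrier G" "set w2 \<subseteq> carrier G" using w1 w2 A_carrier by auto
  then have "gprod (w1 @ w2) = x \<otimes> y" using w1 w2 by (auto simp: gprod_append)
  moreover have "set (w1 @ w2) \<subseteq> A" using w1 w2 by auto
  ultimately show ?thesis using wl_le[of "w1 @ w2"] w1 w2 by simp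
qed

lemma gprod_rev_inv: "set ws \<subseteq> carrier G \<Longrightarrow> gprod (rev (map (m_inv G) ws)) = inv (gprod ws)"
proof (induction ws)
  case Nil then show ?case by simp
next
  case (Cons a ws)
  have "set (rev (map (m_inv G) ws)) \<subseteq> carrier G" using Cons.prems by auto
  then have "gprod (rev (map (m_inv G) (a # ws))) = gprod (rev (map (m_inv G) ws)) \<otimes> gprod [inv a]"
    using Cons.prems by (simp add: gprod_append)
  also have "\<dots> = inv (gprod ws) \<otimes> inv a" using Cons by simp
  also have "\<dots> = inv (gprod (a # ws))" using Cons.prems by (simp add: inv_mult_group gprod_closed)
  finally show ?case .
qed

lemma inv_A: "a \<in> A \<Longrightarrow> inv a \<in> A"
  using Ssub by (auto simp: subsetD)

lemma wl_inv_le: "x \<in> carrier G \<Longrightarrow> wl (inv x) \<le> wl x"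
proof -
  assume x: "x \<in> carrier G"
  obtain w where w: "set w \<subseteq> A" "gprod w = x" "length w = wl x" using wl_word[OF x] by blast
  have "set (rev (map (m_inv G) w)) \<subseteq> A" using w inv_A by auto
  moreover have "gprod (rev (map (m_inv G) w)) = inv x" using w A_carrier gprod_rev_inv[of w] by auto
  ultimately show ?thesis using wl_le[of "rev (map (m_inv G) w)"] w by simp
qed

lemma wl_inv: "x \<in> carrier G \<Longrightarrow> wl (inv x) = wl x"
  using wl_inv_le[of x] wl_inv_le[of "inv x"] by simp

lemma wl_one: "wl \<one> = 0"
  using wl_le[of "[]"] by simp

lemma wl_zero: "x \<in> carrier G \<Longrightarrow> wl x = 0 \<Longrightarrow> x = \<one>"
  using wl_word[of x] by auto

lemma wl_letter: "s \<in> A \<Longrightarrow> wl s \<le> 1"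
  using wl_le[of "[s]"] A_carrier by auto

lemma d_def': "d x y = real (wl (inv x \<otimes> y))" by (simp add: word_dist_def)

lemma d_nonneg: "d x y \<ge> 0" by (simp add: d_def')

lemma d_self: "x \<in> carrier G \<Longrightarrow> d x x = 0" by (simp add: d_def' wl_one)

lemma d_sym: "x \<in> carrier G \<Longrightarrow> y \<in> carrier G \<Longrightarrow> d x y = d y x"
proof -
  assume a: "x \<in> carrier G" "y \<in> carrier G"
  have "inv (inv x \<otimes> y) = inv y \<otimes> x" using a by (simp add: inv_mult_group)
  then show ?thesis using wl_inv[of "inv x \<otimes> y"] a by (simp add: d_def')
qed

lemma d_tri: "x \<in> carrier G \<Longrightarrow> y \<in> carrier G \<Longrightarrow> z \<in> carrier G \<Longrightarrow> d x z \<le> d x y + d y z"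
proof -
  assume xyz: "x \<in> carrier G" "y \<in> carrier G" "z \<in> carrier G"
  have "inv x \<otimes> z = (inv x \<otimes> y) \<otimes> (inv y \<otimes> z)" using xyz
    by (simp add: m_assoc[symmetric]) (simp add: m_assoc)
  then show ?thesis using wl_mult[of "inv x \<otimes> y" "inv y \<otimes> z"] xyz by (simp add: d_def')
qed

lemma d_transl: "g \<in> carrier G \<Longrightarrow> x \<in> carrier G \<Longrightarrow> y \<in> carrier G \<Longrightarrow> d (g \<otimes> x) (g \<otimes> y) = d x y"
proof -
  assume a: "g \<in> carrier G" "x \<in> carrier G" "y \<in> carrier G"
  have "inv (g \<otimes> x) \<otimes> (g \<otimes> y) = inv x \<otimes> y" using a
    by (simp add: inv_mult_group m_assoc[symmetric]) (simp add: m_assoc)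
  then show ?thesis by (simp add: d_def')
qed

lemma d_one_left: "y \<in> carrier G \<Longrightarrow> d \<one> y = wl y" by (simp add: d_def')

lemma d_zero: "x \<in> carrier G \<Longrightarrow> y \<in> carrier G \<Longrightarrow> d x y = 0 \<Longrightarrow> x = y"
proof -
  assume a: "x \<in> carrier G" "y \<in> carrier G" "d x y = 0"
  then have "inv x \<otimes> y = \<one>" using wl_zero[of "inv x \<otimes> y"] by (simp add: d_def')
  then show ?thesis using a by (metis inv_equality r_inv inv_closed inv_inv)
qed

lemma finite_wl_ball: "finite {x \<in> carrier G. wl x \<le> n}"
proof -
  have "{x \<in> carrier G. wl x \<le> n} \<subseteq> gprod ` {ws. set ws \<subseteq> A \<and> length ws \<le> n}"
  proof
    fix x assume "x \<in> {x \<in> carrier G. wl x \<le> n}"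
    then obtain w where "set w \<subseteq> A" "gprod w = x" "length w = wl x" "wl x \<le> n" using wl_word by blast
    then show "x \<in> gprod ` {ws. set ws \<subseteq> A \<and> length ws \<le> n}" by auto
  qed
  then show ?thesis using finite_lists_length_le[OF finA] finite_subset by blast
qed

lemma finite_ball: "x \<in> carrier G \<Longrightarrow> finite {y \<in> carrier G. d x y \<le> r}"
proof -
  assume x: "x \<in> carrier G"
  have "{y \<in> carrier G. d x y \<le> r} \<subseteq> (\<lambda>z. x \<otimes> z) ` {z \<in> carrier G. wl z \<le> nat \<lfloor>r\<rfloor>}"
  proof
    fix y assume y: "y \<in> {y \<in> carrier G. d x y \<le> r}"
    then have "real (wl (inv x \<otimes> y)) \<le> r" by (simp add: d_def')
    then have "wl (inv x \<otimes> y) \<le> nat \<lfloor>r\<rfloor>" by linarith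
    moreover have "y = x \<otimes> (inv x \<otimes> y)" using x y by (simp add: m_assoc[symmetric])
    ultimately show "y \<in> (\<lambda>z. x \<otimes> z) ` {z \<in> carrier G. wl z \<le> nat \<lfloor>r\<rfloor>}" using x y by auto
  qed
  then show ?thesis using finite_wl_ball finite_subset by blast
qed

end



context wm begin

lemma alg1: "h \<in> carrier G \<Longrightarrow> p \<in> carrier G \<Longrightarrow> h0 \<in> carrier G \<Longrightarrow> p0 \<in> carrier G \<Longrightarrow>
  inv h \<otimes> p = inv h0 \<otimes> p0 \<Longrightarrow> h \<otimes> inv h0 = p \<otimes> inv p0"
proof -
  assume c: "h \<in> carrier G" "p \<in> carrier G" "h0 \<in> carrier G" "p0 \<in> carrier G"
    and e: "inv h \<otimes> p = inv h0 \<otimes> p0"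
  have "p = h \<otimes> (inv h \<otimes> p)" using c by (simp add: m_assoc[symmetric])
  also have "\<dots> = h \<otimes> (inv h0 \<otimes> p0)" using e by simp
  finally have "p \<otimes> inv p0 = h \<otimes> (inv h0 \<otimes> p0) \<otimes> inv p0" by simp
  also have "\<dots> = h \<otimes> inv h0" using c by (simp add: m_assoc)
  finally show ?thesis by simp
qed

lemma succ_nth: "successively P xs \<longleftrightarrow> (\<forall>i. Suc i < length xs \<longrightarrow> P (xs!i) (xs!Suc i))"
proof (induction xs)
  case Nil then show ?case by simp
next
  case (Cons a xs)
  show ?case
  proof (cases xs)
    case Nil then show ?thesis by simp
  next
    case (Cons b ys)
    have "(\<forall>i. Suc i < length (a # xs) \<longrightarrow> P ((a # xs) ! i) ((a # xs) ! Suc i)) \<longleftrightarrow>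
          P a b \<and> (\<forall>i. Suc i < length xs \<longrightarrow> P (xs!i) (xs!Suc i))"
      using Cons by (auto simp: All_less_Suc2 less_Suc_eq_0_disj)
    then show ?thesis using Cons.IH Cons by simp
  qed
qed

lemma geo_word: "set ws \<subseteq> A \<Longrightarrow> x \<in> carrier G \<Longrightarrow> \<exists>ps. ps \<noteq> [] \<and> hd ps = x \<and> last ps = x \<otimes> gprod ws \<and>
   set ps \<subseteq> carrier G \<and> (\<forall>p\<in>set ps. d x p \<le> length ws) \<and> successively (\<lambda>a b. d a b \<le> 1) ps"
proof (induction ws arbitrary: x)
  case Nil then show ?case by (intro exI[of _ "[x]"]) (auto simp: d_self)
next
  case (Cons w ws)
  have w: "w \<in> carrier G" "w \<in> A" using Cons.prems A_carrier by auto
  have xw: "x \<otimes> w \<in> carrier G" using w Cons.prems by simp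
  obtain ps where ps: "ps \<noteq> []" "hd ps = x \<otimes> w" "last ps = x \<otimes> w \<otimes> gprod ws" "set ps \<subseteq> carrier G"
     "\<forall>p\<in>set ps. d (x \<otimes> w) p \<le> length ws" "successively (\<lambda>a b. d a b \<le> 1) ps"
    using Cons.IH[OF _ xw] Cons.prems by auto
  have dxw: "d x (x \<otimes> w) \<le> 1"
  proof -
    have "d x (x \<otimes> w) = d (x \<otimes> \<one>) (x \<otimes> w)" using Cons.prems by simp
    also have "\<dots> = d \<one> w" using Cons.prems w by (intro d_transl) auto
    also have "\<dots> \<le> 1" using wl_letter[OF w(2)] w by (simp add: d_one_left)
    finally show ?thesis .
  qed
  have ws: "set ws \<subseteq> carrier G" using Cons.prems A_carrier by auto
  show ?case
  proof (intro exI[of _ "x # ps"] conjI)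
    show "last (x # ps) = x \<otimes> gprod (w # ws)" using ps Cons.prems w ws by (simp add: m_assoc gprod_closed)
    show "set (x # ps) \<subseteq> carrier G" using ps Cons.prems by auto
    show "\<forall>p\<in>set (x # ps). d x p \<le> real (length (w # ws))"
    proof
      fix p assume "p \<in> set (x # ps)"
      then consider "p = x" | "p \<in> set ps" by auto
      then show "d x p \<le> real (length (w # ws))"
      proof cases
        case 1 then show ?thesis using Cons.prems by (simp add: d_self)
      next
        case 2
        then have "d x p \<le> d x (x \<otimes> w) + d (x \<otimes> w) p" using d_tri Cons.prems xw ps(4) by blast
        then show ?thesis using dxw ps(5) 2 by fastforce
      qed
    qed
    show "successively (\<lambda>a b. d a b \<le> 1) (x # ps)"
      using ps dxw by (simp add: successively_Cons)
  qed auto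
qed

lemma geodesic: "x \<in> carrier G \<Longrightarrow> y \<in> carrier G \<Longrightarrow> \<exists>ps. ps \<noteq> [] \<and> hd ps = x \<and> last ps = y \<and>
   set ps \<subseteq> carrier G \<and> (\<forall>p\<in>set ps. d x p \<le> d x y) \<and> successively (\<lambda>a b. d a b \<le> 1) ps"
proof -
  assume x: "x \<in> carrier G" and y: "y \<in> carrier G"
  obtain ws where ws: "set ws \<subseteq> A" "gprod ws = inv x \<otimes> y" "length ws = wl (inv x \<otimes> y)"
    using wl_word[of "inv x \<otimes> y"] x y by auto
  have "x \<otimes> gprod ws = y" using ws x y by (simp add: m_assoc[symmetric])
  moreover have "real (length ws) = d x y" using ws by (simp add: d_def')
  ultimately show ?thesis using geo_word[OF ws(1) x] by metis
qed

lemma infinite_diam: "A' \<subseteq> carrier G \<Longrightarrow> infinite A' \<Longrightarrow> infinite_diameter d A'"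
proof -
  assume a: "A' \<subseteq> carrier G" "infinite A'"
  show ?thesis unfolding infinite_diameter_def
  proof
    assume "\<exists>B. \<forall>x\<in>A'. \<forall>y\<in>A'. d x y \<le> B"
    then obtain B where B: "\<forall>x\<in>A'. \<forall>y\<in>A'. d x y \<le> B" by blast
    obtain x0 where x0: "x0 \<in> A'" using a(2) by (metis finite.emptyI ex_in_conv)
    have "A' \<subseteq> {y \<in> carrier G. d x0 y \<le> B}" using B x0 a(1) by auto
    then have "finite A'" using finite_ball[of x0 B] x0 a(1) finite_subset by blast
    then show False using a(2) by simp
  qed
qed

lemma infinite_diam_mono: "A1 \<subseteq> A2 \<Longrightarrow> infinite_diameter d A1 \<Longrightarrow> infinite_diameter d A2"
  unfolding infinite_diameter_def by blast

lemma nbhd_int: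
  assumes H: "subgroup H G" and K: "subgroup K G"
  shows "\<exists>R. \<forall>p\<in>carrier G. (\<exists>h\<in>H. d p h < r) \<and> (\<exists>k\<in>K. d p k < r) \<longrightarrow> (\<exists>c\<in>H\<inter>K. d p c < R)"
proof -
  define B where "B = {u \<in> carrier G. d \<one> u \<le> r}"
  have "finite B" unfolding B_def by (rule finite_ball) simp
  then have finB: "finite (B \<times> B)" by (intro finite_cartesian_product)
  define Q where "Q = (\<lambda>uv R0. \<forall>p\<in>carrier G. \<forall>h\<in>H. \<forall>k\<in>K. inv h \<otimes> p = fst uv \<longrightarrow> inv k \<otimes> p = snd uv \<longrightarrow>
       (\<exists>c\<in>H\<inter>K. d p c < R0))"
  have Hc: "\<And>h. h \<in> H \<Longrightarrow> h \<in> carrier G" by (rule subgroup.mem_carrier[OF H])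
  have Kc: "\<And>h. h \<in> K \<Longrightarrow> h \<in> carrier G" by (rule subgroup.mem_carrier[OF K])
  have ex: "\<exists>R0. Q uv R0" for uv
  proof (cases "\<exists>p0\<in>carrier G. \<exists>h0\<in>H. \<exists>k0\<in>K. inv h0 \<otimes> p0 = fst uv \<and> inv k0 \<otimes> p0 = snd uv")
    case False then show ?thesis unfolding Q_def by blast
  next
    case True
    then obtain p0 h0 k0 where w: "p0 \<in> carrier G" "h0 \<in> H" "k0 \<in> K" "inv h0 \<otimes> p0 = fst uv" "inv k0 \<otimes> p0 = snd uv"
      by blast
    have "Q uv (real (wl (inv p0)) + 1)" unfolding Q_def
    proof (intro ballI impI)
      fix p h k assume p: "p \<in> carrier G" "h \<in> H" "k \<in> K" "inv h \<otimes> p = fst uv" "inv k \<otimes> p = snd uv"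
      have e1: "h \<otimes> inv h0 = p \<otimes> inv p0" using alg1[of h p h0 p0] p w Hc by simp
      have e2: "k \<otimes> inv k0 = p \<otimes> inv p0" using alg1[of k p k0 p0] p w Kc by simp
      have cH: "h \<otimes> inv h0 \<in> H" using p w H by (simp add: subgroup.m_closed subgroup.m_inv_closed)
      have cK: "k \<otimes> inv k0 \<in> K" using p w K by (simp add: subgroup.m_closed subgroup.m_inv_closed)
      have "inv p \<otimes> (p \<otimes> inv p0) = inv p0" using p w by (simp add: m_assoc[symmetric])
      then have "d p (p \<otimes> inv p0) = real (wl (inv p0))" by (simp add: d_def')
      then show "\<exists>c\<in>H\<inter>K. d p c < real (wl (inv p0)) + 1" using cH cK e1 e2
        by (intro bexI[of _ "p \<otimes> inv p0"]) auto
    qed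
    then show ?thesis by blast
  qed
  have mono: "\<And>uv R0 R1. Q uv R0 \<Longrightarrow> R0 \<le> R1 \<Longrightarrow> Q uv R1"
    unfolding Q_def by (blast intro: order_less_le_trans)
  have "\<exists>R. \<forall>uv\<in>B \<times> B. Q uv R"
    by (rule uniform_bound[OF finB]) (use ex mono in blast)+
  then obtain R where R: "\<forall>uv\<in>B \<times> B. Q uv R" by blast
  show ?thesis
  proof (intro exI[of _ R] ballI impI)
    fix p assume p: "p \<in> carrier G" and "(\<exists>h\<in>H. d p h < r) \<and> (\<exists>k\<in>K. d p k < r)"
    then obtain h k where hk: "h \<in> H" "k \<in> K" "d p h < r" "d p k < r" by blast
    have "d \<one> (inv h \<otimes> p) = d h p" using hk p Hc by (simp add: d_one_left d_def')
    then have u: "inv h \<otimes> p \<in> B" using hk p Hc d_sym[of p h] unfolding B_def by auto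
    have "d \<one> (inv k \<otimes> p) = d k p" using hk p Kc by (simp add: d_one_left d_def')
    then have v: "inv k \<otimes> p \<in> B" using hk p Kc d_sym[of p k] unfolding B_def by auto
    have "Q (inv h \<otimes> p, inv k \<otimes> p) R" using R u v by blast
    then show "\<exists>c\<in>H\<inter>K. d p c < R" using p hk unfolding Q_def fst_conv snd_conv by blast
  qed
qed

end



lemma qcE: assumes "quasi_convex d Sp C L A" "x \<in> A" "y \<in> A"
  obtains a b q where "a \<le> b" "quasi_geodesic d Sp L L {a..b} q"
        "q a = x" "q b = y" "q ` {a..b} \<subseteq> nbhd d Sp C A"
  using assms unfolding quasi_convex_def by blast

lemma qgD: assumes "quasi_geodesic d Sp lam kap I q"
  shows "q ` I \<subseteq> Sp" "\<And>s t. s \<in> I \<Longrightarrow> t \<in> I \<Longrightarrow> d (q s) (q t) \<le> lam * \<bar>s - t\<bar> + kap"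
    "\<And>s t. s \<in> I \<Longrightarrow> t \<in> I \<Longrightarrow> \<bar>s - t\<bar> / lam - kap \<le> d (q s) (q t)"
  using assms unfolding quasi_geodesic_def by auto

context wm begin

lemma qc_pos: "quasi_convex d (carrier G) C L H \<Longrightarrow> x \<in> H \<Longrightarrow> C > 0"
proof -
  assume qc: "quasi_convex d (carrier G) C L H" and x: "x \<in> H"
  obtain a b q where ab: "a \<le> b" and "quasi_geodesic d (carrier G) L L {a..b} q" and qa: "q a = x" and "q b = x" and qi: "q ` {a..b} \<subseteq> nbhd d (carrier G) C H"
    by (rule qcE[OF qc x x])
  have "q a \<in> q ` {a..b}" using ab by auto
  then have "x \<in> nbhd d (carrier G) C H" using qi qa by blast
  then obtain y where "d x y < C" unfolding nbhd_def by blast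
  then show ?thesis using d_nonneg[of x y] by linarith
qed

lemma qc_gen:
  assumes H: "subgroup H G" and qc: "quasi_convex d (carrier G) M M H" and M: "M > 0" and h: "h \<in> H"
  shows "h \<in> generate G (H \<inter> {z \<in> carrier G. d \<one> z < 4 * M})"
proof -
  define Gen where "Gen = generate G (H \<inter> {z \<in> carrier G. d \<one> z < 4 * M})"
  have GenH: "Gen \<subseteq> H" unfolding Gen_def by (rule generate_subgroup_incl[OF _ H]) auto
  have Hc: "\<And>h. h \<in> H \<Longrightarrow> h \<in> carrier G" by (rule subgroup.mem_carrier[OF H])
  have one: "\<one> \<in> H" by (rule subgroup.one_closed[OF H])
  obtain a b q where ab: "a \<le> b" and qg: "quasi_geodesic d (carrier G) M M {a..b} q"
    and qa: "q a = \<one>" and qb: "q b = h" and qin: "q ` {a..b} \<subseteq> nbhd d (carrier G) M H"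
    by (rule qcE[OF qc one h])
  have qc': "\<And>s. s \<in> {a..b} \<Longrightarrow> q s \<in> carrier G" using qgD(1)[OF qg] by blast
  have qd: "\<And>s t. s \<in> {a..b} \<Longrightarrow> t \<in> {a..b} \<Longrightarrow> d (q s) (q t) \<le> M * \<bar>s - t\<bar> + M"
    by (rule qgD(2)[OF qg])
  define n where "n = nat \<lceil>b - a\<rceil> + 1"
  have n1: "real n \<ge> 1" "real n \<ge> b - a" unfolding n_def by linarith+
  define t where "t i = a + (b - a) * real i / real n" for i
  have t_in: "t i \<in> {a..b}" if "i \<le> n" for i
  proof -
    have "real i / real n \<le> 1" "0 \<le> real i / real n" using that n1 by auto
    then have "(b - a) * (real i / real n) \<le> (b - a) * 1" "0 \<le> (b - a) * (real i / real n)"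
      using ab by (metis diff_ge_0_iff_ge mult_left_mono, metis diff_ge_0_iff_ge mult_nonneg_nonneg)
    then show ?thesis unfolding t_def by (simp add: times_divide_eq_right)
  qed
  have t_step: "\<bar>t i - t (Suc i)\<bar> \<le> 1" for i
  proof -
    have "t (Suc i) - t i = (b - a) / real n" unfolding t_def using n1 by (simp add: field_simps)
    moreover have "(b - a) / real n \<le> 1" "0 \<le> (b - a) / real n" using n1 ab by (auto simp: field_simps)
    ultimately show ?thesis by linarith
  qed
  have t0: "t 0 = a" unfolding t_def by simp
  have tn: "t n = b" unfolding t_def using n1 by simp
  have claim: "i \<le> n \<Longrightarrow> \<exists>g\<in>Gen. d (q (t i)) g < M" for i
  proof (induction i)
    case 0
    have "\<one> \<in> Gen" unfolding Gen_def by (rule generate.one)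
    moreover have "d \<one> \<one> = 0" by (rule d_self) simp
    ultimately show ?case using t0 qa M by (intro bexI[of _ "\<one>"]) auto
  next
    case (Suc i)
    then obtain g where g: "g \<in> Gen" "d (q (t i)) g < M" by auto
    have ti: "t i \<in> {a..b}" "t (Suc i) \<in> {a..b}" using Suc.prems t_in by auto
    have qq: "d (q (t i)) (q (t (Suc i))) \<le> 2 * M"
    proof -
      have "d (q (t i)) (q (t (Suc i))) \<le> M * \<bar>t i - t (Suc i)\<bar> + M" using qd ti by blast
      also have "\<dots> \<le> M * 1 + M" using t_step[of i] M by (intro add_right_mono mult_left_mono) auto
      finally show ?thesis by simp
    qed
    have "q (t (Suc i)) \<in> nbhd d (carrier G) M H" using qin ti by auto
    then obtain g' where g': "g' \<in> H" "d (q (t (Suc i))) g' < M" unfolding nbhd_def by blast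
    have gc: "g \<in> carrier G" "g' \<in> carrier G" using g GenH g' Hc by auto
    have qc2: "q (t i) \<in> carrier G" "q (t (Suc i)) \<in> carrier G" using qc' ti by auto
    define e where "e = inv g \<otimes> g'"
    have eH: "e \<in> H" unfolding e_def using g GenH g' H by (auto simp: subgroup.m_closed subgroup.m_inv_closed)
    have "d g g' \<le> d g (q (t i)) + d (q (t i)) g'" using d_tri gc qc2 by blast
    also have "\<dots> \<le> d g (q (t i)) + (d (q (t i)) (q (t (Suc i))) + d (q (t (Suc i))) g')"
      using d_tri gc qc2 by (meson add_left_mono)
    finally have "d g g' < 4 * M" using g g' qq d_sym[of g "q (t i)"] gc qc2 by linarith
    moreover have "d \<one> e = d g g'" unfolding e_def using gc by (simp add: d_def')
    ultimately have "e \<in> Gen" unfolding Gen_def using eH Hc by (intro generate.incl) auto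
    moreover have "g' = g \<otimes> e" unfolding e_def using gc by (simp add: m_assoc[symmetric])
    ultimately have "g' \<in> Gen" using g unfolding Gen_def by (metis generate.eng)
    then show ?case using g' by blast
  qed
  obtain g where g: "g \<in> Gen" "d h g < M" using claim[of n] tn qb by auto
  have gc: "g \<in> carrier G" "h \<in> carrier G" using g GenH h Hc by auto
  define e where "e = inv g \<otimes> h"
  have eH: "e \<in> H" unfolding e_def using g GenH h H by (auto simp: subgroup.m_closed subgroup.m_inv_closed)
  have "d \<one> e = d g h" unfolding e_def using gc by (simp add: d_def')
  then have "d \<one> e < 4 * M" using g d_sym[of g h] gc M by linarith
  then have "e \<in> Gen" unfolding Gen_def using eH Hc by (intro generate.incl) auto
  moreover have "h = g \<otimes> e" unfolding e_def using gc by (simp add: m_assoc[symmetric])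
  ultimately show ?thesis using g unfolding Gen_def by (metis generate.eng)
qed

lemma H_finite:
  assumes "\<forall>H\<in>\<H>. subgroup H G \<and> quasi_convex d (carrier G) M M H" and M: "M > 0"
  shows "finite \<H>"
proof -
  define B where "B = {z \<in> carrier G. d \<one> z \<le> 4 * M}"
  have "finite B" unfolding B_def by (rule finite_ball) simp
  have "\<H> \<subseteq> generate G ` Pow B"
  proof
    fix H assume HH: "H \<in> \<H>"
    then have H: "subgroup H G" "quasi_convex d (carrier G) M M H" using assms by auto
    have "H \<subseteq> generate G (H \<inter> {z \<in> carrier G. d \<one> z < 4 * M})"
      using qc_gen[OF H M] by blast
    moreover have "generate G (H \<inter> {z \<in> carrier G. d \<one> z < 4 * M}) \<subseteq> H"
      by (rule generate_subgroup_incl[OF _ H(1)]) auto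
    ultimately have "H = generate G (H \<inter> {z \<in> carrier G. d \<one> z < 4 * M})" by blast
    moreover have "H \<inter> {z \<in> carrier G. d \<one> z < 4 * M} \<in> Pow B" unfolding B_def by auto
    ultimately show "H \<in> generate G ` Pow B" by blast
  qed
  then show ?thesis using \<open>finite B\<close> finite_subset by blast
qed

end



context wm begin

lemma lcos_mem: "z \<in> g <# H \<longleftrightarrow> (\<exists>h\<in>H. z = g \<otimes> h)"
  unfolding l_coset_def by auto

lemma nbhd_coset: "z \<in> nbhd d (carrier G) r (g <# H) \<longleftrightarrow> z \<in> carrier G \<and> (\<exists>h\<in>H. d z (g \<otimes> h) < r)"
  unfolding nbhd_def l_coset_def by auto

lemma qc_coset:
  assumes g: "g \<in> carrier G" and H: "subgroup H G" and qc: "quasi_convex d (carrier G) M M H"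
    and Mt: "M \<le> tau" and Me: "M \<le> eta"
  shows "quasi_convex d (carrier G) tau eta (g <# H)"
  unfolding quasi_convex_def
proof (intro ballI)
  fix x y assume x: "x \<in> g <# H" and y: "y \<in> g <# H"
  obtain h1 where h1: "h1 \<in> H" "x = g \<otimes> h1" using x lcos_mem by blast
  obtain h2 where h2: "h2 \<in> H" "y = g \<otimes> h2" using y lcos_mem by blast
  have Mpos: "M > 0" using qc_pos[OF qc h1(1)] .
  have Hc: "\<And>h. h \<in> H \<Longrightarrow> h \<in> carrier G" by (rule subgroup.mem_carrier[OF H])
  obtain a b q where ab: "a \<le> b" and qg: "quasi_geodesic d (carrier G) M M {a..b} q"
    and qa: "q a = h1" and qb: "q b = h2" and qin: "q ` {a..b} \<subseteq> nbhd d (carrier G) M H"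
    by (rule qcE[OF qc h1(1) h2(1)])
  define q' where "q' = (\<lambda>t. g \<otimes> q t)"
  have qc': "\<And>s. s \<in> {a..b} \<Longrightarrow> q s \<in> carrier G" using qgD(1)[OF qg] by blast
  have dq: "\<And>s t. s \<in> {a..b} \<Longrightarrow> t \<in> {a..b} \<Longrightarrow> d (q' s) (q' t) = d (q s) (q t)"
    unfolding q'_def using qc' g by (intro d_transl) auto
  have "quasi_geodesic d (carrier G) eta eta {a..b} q'"
    unfolding quasi_geodesic_def
  proof (intro conjI ballI)
    show "connected {a..b}" by simp
    show "q' ` {a..b} \<subseteq> carrier G" unfolding q'_def using qc' g by auto
  next
    fix s t assume st: "s \<in> {a..b}" "t \<in> {a..b}"
    have "\<bar>s - t\<bar> / eta \<le> \<bar>s - t\<bar> / M" using Mpos Me by (intro divide_left_mono) auto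
    then show "\<bar>s - t\<bar> / eta - eta \<le> d (q' s) (q' t)"
      using qgD(3)[OF qg st] dq[OF st] Me by linarith
    have "M * \<bar>s - t\<bar> \<le> eta * \<bar>s - t\<bar>" using Me by (intro mult_right_mono) auto
    then show "d (q' s) (q' t) \<le> eta * \<bar>s - t\<bar> + eta"
      using qgD(2)[OF qg st] dq[OF st] Me by linarith
  qed
  moreover have "q' ` {a..b} \<subseteq> nbhd d (carrier G) tau (g <# H)"
  proof
    fix z assume "z \<in> q' ` {a..b}"
    then obtain t where t: "t \<in> {a..b}" "z = q' t" by blast
    then have "q t \<in> nbhd d (carrier G) M H" using qin by blast
    then obtain h where h: "h \<in> H" "d (q t) h < M" unfolding nbhd_def by blast
    have "d z (g \<otimes> h) = d (q t) h" unfolding t(2) q'_def using qc'[OF t(1)] g Hc[OF h(1)] by (intro d_transl) auto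
    then show "z \<in> nbhd d (carrier G) tau (g <# H)" unfolding nbhd_coset
      using h Mt t qc' g unfolding q'_def by (intro conjI bexI[of _ h]) auto
  qed
  moreover have "q' a = x" "q' b = y" unfolding q'_def using qa qb h1 h2 by auto
  ultimately show "\<exists>a b q. a \<le> b \<and> quasi_geodesic d (carrier G) eta eta {a..b} q \<and> q a = x \<and> q b = y \<and>
     q ` {a..b} \<subseteq> nbhd d (carrier G) tau (g <# H)" using ab by blast
qed

lemma pcE: assumes "path_conn d Sp C Y0" "x \<in> Y0" "y \<in> Y0"
  obtains ps where "ps \<noteq> []" "hd ps = x" "last ps = y" "set ps \<subseteq> nbhd d Sp C Y0"
    "successively (\<lambda>a b. d a b \<le> 1) ps"
  using assms unfolding path_conn_def succ_nth by blast

lemma pcI: assumes "\<And>x y. x \<in> Y0 \<Longrightarrow> y \<in> Y0 \<Longrightarrow> \<exists>ps. ps \<noteq> [] \<and> hd ps = x \<and> last ps = y \<and> set ps \<subseteq> nbhd d Sp C Y0 \<and>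
    successively (\<lambda>a b. d a b \<le> 1) ps"
  shows "path_conn d Sp C Y0"
  using assms unfolding path_conn_def succ_nth by blast

lemma pc_transl:
  assumes g: "g \<in> carrier G" and Y0: "Y0 \<subseteq> carrier G" and pc: "path_conn d (carrier G) C Y0"
    and x: "x \<in> Y0" and y: "y \<in> Y0"
  shows "\<exists>ps. ps \<noteq> [] \<and> hd ps = g \<otimes> x \<and> last ps = g \<otimes> y \<and>
     (\<forall>p\<in>set ps. p \<in> carrier G \<and> (\<exists>z\<in>Y0. d p (g \<otimes> z) < C)) \<and> successively (\<lambda>a b. d a b \<le> 1) ps"
proof -
  obtain ps where ps: "ps \<noteq> []" "hd ps = x" "last ps = y" "set ps \<subseteq> nbhd d (carrier G) C Y0"
    "successively (\<lambda>a b. d a b \<le> 1) ps" by (rule pcE[OF pc x y])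
  have pc: "set ps \<subseteq> carrier G" using ps(4) unfolding nbhd_def by auto
  show ?thesis
  proof (intro exI[of _ "map (\<lambda>p. g \<otimes> p) ps"] conjI)
    show "map (\<lambda>p. g \<otimes> p) ps \<noteq> []" using ps by simp
    show "hd (map (\<lambda>p. g \<otimes> p) ps) = g \<otimes> x" using ps by (simp add: hd_map)
    show "last (map (\<lambda>p. g \<otimes> p) ps) = g \<otimes> y" using ps by (simp add: last_map)
    show "\<forall>p\<in>set (map (\<lambda>p. g \<otimes> p) ps). p \<in> carrier G \<and> (\<exists>z\<in>Y0. d p (g \<otimes> z) < C)"
    proof
      fix p assume "p \<in> set (map (\<lambda>p. g \<otimes> p) ps)"
      then obtain p0 where p0: "p0 \<in> set ps" "p = g \<otimes> p0" by auto
      then obtain z where z: "z \<in> Y0" "d p0 z < C" using ps(4) unfolding nbhd_def by blast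
      have "d p (g \<otimes> z) = d p0 z" unfolding p0(2) using g pc p0 Y0 z by (intro d_transl) auto
      then show "p \<in> carrier G \<and> (\<exists>z\<in>Y0. d p (g \<otimes> z) < C)" using z g pc p0 by (intro conjI bexI[of _ z]) auto
    qed
    have "successively (\<lambda>a b. d (g \<otimes> a) (g \<otimes> b) \<le> 1) ps"
    proof (rule successively_mono[OF ps(5)])
      fix a b assume "a \<in> set ps" "b \<in> set ps" "d a b \<le> 1"
      moreover have "a \<in> carrier G" "b \<in> carrier G" using calculation pc by auto
      ultimately show "d (g \<otimes> a) (g \<otimes> b) \<le> 1" using d_transl[of g a b] g by linarith
    qed
    then show "successively (\<lambda>a b. d a b \<le> 1) (map (\<lambda>p. g \<otimes> p) ps)" by (simp add: successively_map)
  qed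
qed

definition link :: "real \<Rightarrow> real \<Rightarrow> 'a \<Rightarrow> 'a set \<Rightarrow> 'a set \<Rightarrow> bool" where
  "link tau eta x L L' = (let I = nbhd d (carrier G) tau L \<inter> nbhd d (carrier G) tau L' in
     infinite_diameter d I \<and> path_conn d (carrier G) eta I \<and> I \<inter> oball d (carrier G) x eta \<noteq> {})"

lemma link_lemma:
  assumes c: "c \<in> carrier G" and x: "x \<in> carrier G"
    and K1: "subgroup K1 G" and K2: "subgroup K2 G"
    and inf: "infinite (K1 \<inter> K2)" and pc: "path_conn d (carrier G) M (K1 \<inter> K2)"
    and tau: "0 < tau" and Me: "M \<le> eta" and Re: "R \<le> eta"
    and Rp: "\<forall>p\<in>carrier G. (\<exists>h\<in>K1. d p h < tau) \<and> (\<exists>k\<in>K2. d p k < tau) \<longrightarrow> (\<exists>z\<in>K1\<inter>K2. d p z < R)"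
    and xc: "d x c < eta"
  shows "link tau eta x (c <# K1) (c <# K2)"
proof -
  define I where "I = nbhd d (carrier G) tau (c <# K1) \<inter> nbhd d (carrier G) tau (c <# K2)"
  have K1c: "\<And>h. h \<in> K1 \<Longrightarrow> h \<in> carrier G" by (rule subgroup.mem_carrier[OF K1])
  have K2c: "\<And>h. h \<in> K2 \<Longrightarrow> h \<in> carrier G" by (rule subgroup.mem_carrier[OF K2])
  have Ic: "I \<subseteq> carrier G" unfolding I_def nbhd_def by auto
  have memI: "c \<otimes> z \<in> I" if z: "z \<in> K1 \<inter> K2" for z
  proof -
    have zc: "z \<in> carrier G" using z K1c by auto
    have "d (c \<otimes> z) (c \<otimes> z) = 0" using c zc by (intro d_self) auto
    then show ?thesis unfolding I_def Int_iff nbhd_coset using z tau c zc by (intro conjI bexI[of _ z]) auto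
  qed
  have "infinite ((\<lambda>z. c \<otimes> z) ` (K1 \<inter> K2))"
  proof
    assume "finite ((\<lambda>z. c \<otimes> z) ` (K1 \<inter> K2))"
    moreover have "inj_on (\<lambda>z. c \<otimes> z) (K1 \<inter> K2)" using c K1c by (intro inj_onI) auto
    ultimately show False using inf finite_imageD by blast
  qed
  moreover have "(\<lambda>z. c \<otimes> z) ` (K1 \<inter> K2) \<subseteq> I" using memI by auto
  ultimately have "infinite I" using finite_subset by blast
  then have ID: "infinite_diameter d I" using infinite_diam Ic by blast
  have one12: "\<one> \<in> K1 \<inter> K2" using subgroup.one_closed[OF K1] subgroup.one_closed[OF K2] by auto
  have "c \<in> I" using memI[OF one12] c by simp
  then have OB: "I \<inter> oball d (carrier G) x eta \<noteq> {}" using xc c unfolding oball_def by auto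
  have near: "\<exists>z\<in>K1\<inter>K2. d p (c \<otimes> z) < R" if p: "p \<in> I" for p
  proof -
    have pc: "p \<in> carrier G" using p Ic by auto
    obtain h where h: "h \<in> K1" "d p (c \<otimes> h) < tau" using p unfolding I_def Int_iff nbhd_coset by blast
    obtain k where k: "k \<in> K2" "d p (c \<otimes> k) < tau" using p unfolding I_def Int_iff nbhd_coset by blast
    define p1 where "p1 = inv c \<otimes> p"
    have p1c: "p1 \<in> carrier G" unfolding p1_def using c pc by simp
    have cp1: "c \<otimes> p1 = p" unfolding p1_def using c pc by (simp add: m_assoc[symmetric])
    have "d p1 h = d p (c \<otimes> h)" unfolding cp1[symmetric] using c p1c K1c[OF h(1)] by (intro d_transl[symmetric]) auto
    moreover have "d p1 k = d p (c \<otimes> k)" unfolding cp1[symmetric] using c p1c K2c[OF k(1)] by (intro d_transl[symmetric]) auto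
    ultimately obtain z where z: "z \<in> K1 \<inter> K2" "d p1 z < R" using Rp p1c h k by force
    have "d p (c \<otimes> z) = d p1 z" unfolding cp1[symmetric] using c p1c K1c z by (intro d_transl) auto
    then have "d p (c \<otimes> z) < R" using z by linarith
    then show ?thesis using z(1) by blast
  qed
  have PC: "path_conn d (carrier G) eta I"
  proof (rule pcI)
    fix p p' assume p: "p \<in> I" and p': "p' \<in> I"
    have pcar: "p \<in> carrier G" "p' \<in> carrier G" using p p' Ic by auto
    obtain z where z: "z \<in> K1 \<inter> K2" "d p (c \<otimes> z) < R" using near[OF p] by blast
    obtain z' where z': "z' \<in> K1 \<inter> K2" "d p' (c \<otimes> z') < R" using near[OF p'] by blast
    have czc: "c \<otimes> z \<in> carrier G" "c \<otimes> z' \<in> carrier G" using z z' c K1c by auto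
    obtain ps1 where ps1: "ps1 \<noteq> []" "hd ps1 = p" "last ps1 = c \<otimes> z" "set ps1 \<subseteq> carrier G"
      "\<forall>w\<in>set ps1. d p w \<le> d p (c \<otimes> z)" "successively (\<lambda>a b. d a b \<le> 1) ps1"
      using geodesic[OF pcar(1) czc(1)] by blast
    obtain ps2 where ps2: "ps2 \<noteq> []" "hd ps2 = c \<otimes> z" "last ps2 = c \<otimes> z'"
      "\<forall>w\<in>set ps2. w \<in> carrier G \<and> (\<exists>y\<in>K1 \<inter> K2. d w (c \<otimes> y) < M)" "successively (\<lambda>a b. d a b \<le> 1) ps2"
      using pc_transl[OF c _ pc z(1) z'(1)] K1c by blast
    obtain ps3 where ps3: "ps3 \<noteq> []" "hd ps3 = c \<otimes> z'" "last ps3 = p'" "set ps3 \<subseteq> carrier G"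
      "\<forall>w\<in>set ps3. d (c \<otimes> z') w \<le> d (c \<otimes> z') p'" "successively (\<lambda>a b. d a b \<le> 1) ps3"
      using geodesic[OF czc(2) pcar(2)] by blast
    have dcz: "d (c \<otimes> z) (c \<otimes> z) \<le> 1" "d (c \<otimes> z') (c \<otimes> z') \<le> 1" using czc by (simp_all add: d_self)
    show "\<exists>ps. ps \<noteq> [] \<and> hd ps = p \<and> last ps = p' \<and> set ps \<subseteq> nbhd d (carrier G) eta I \<and>
      successively (\<lambda>a b. d a b \<le> 1) ps"
    proof (intro exI[of _ "ps1 @ ps2 @ ps3"] conjI)
      show "ps1 @ ps2 @ ps3 \<noteq> []" using ps1 by simp
      show "hd (ps1 @ ps2 @ ps3) = p" using ps1 by simp
      show "last (ps1 @ ps2 @ ps3) = p'" using ps3 by simp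
      show "successively (\<lambda>a b. d a b \<le> 1) (ps1 @ ps2 @ ps3)"
        using ps1 ps2 ps3 dcz by (simp add: successively_append_iff)
      show "set (ps1 @ ps2 @ ps3) \<subseteq> nbhd d (carrier G) eta I"
      proof
        fix w assume "w \<in> set (ps1 @ ps2 @ ps3)"
        then consider "w \<in> set ps1" | "w \<in> set ps2" | "w \<in> set ps3" by auto
        then show "w \<in> nbhd d (carrier G) eta I"
        proof cases
          case 1
          then have "w \<in> carrier G" "d w p < eta" using ps1 z Re d_sym[of w p] pcar by (auto dest!: bspec[of _ _ w])
          then show ?thesis using p unfolding nbhd_def by blast
        next
          case 2
          then obtain y where "w \<in> carrier G" "y \<in> K1 \<inter> K2" "d w (c \<otimes> y) < M" using ps2 by blast
          then show ?thesis using memI Me unfolding nbhd_def by force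
        next
          case 3
          then have wc: "w \<in> carrier G" using ps3 by auto
          have "d (c \<otimes> z') w \<le> d (c \<otimes> z') p'" using ps3 3 by blast
          moreover have "d (c \<otimes> z') p' = d p' (c \<otimes> z')" using d_sym czc pcar by blast
          moreover have "d w (c \<otimes> z') = d (c \<otimes> z') w" using d_sym czc wc by blast
          ultimately have "d w (c \<otimes> z') < eta" using z' Re by linarith
          then show ?thesis using wc memI[OF z'(1)] unfolding nbhd_def by blast
        qed
      qed
    qed
  qed
  show ?thesis unfolding link_def Let_def I_def[symmetric] using ID PC OB by blast
qed

end



locale net2 = wm G S for G (structure) and S +
  fixes HH :: "'a set set" and M tau eta R D :: real
  assumes Hsub: "\<And>H. H \<in> HH \<Longrightarrow> subgroup H G"
    and tau: "0 < tau" and Me: "M \<le> eta" and Re: "R \<le> eta"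
    and Rp: "\<And>H K. H \<in> HH \<Longrightarrow> K \<in> HH \<Longrightarrow> \<forall>p\<in>carrier G. (\<exists>h\<in>H. word_dist G S p h < tau) \<and>
       (\<exists>k\<in>K. word_dist G S p k < tau) \<longrightarrow> (\<exists>z\<in>H\<inter>K. word_dist G S p z < R)"
    and Dp: "\<And>H H'. H \<in> HH \<Longrightarrow> H' \<in> HH \<Longrightarrow> \<exists>Hs. Hs \<noteq> [] \<and> hd Hs = H \<and> last Hs = H' \<and> set Hs \<subseteq> HH \<and>
       (\<forall>i. Suc i < length Hs \<longrightarrow> infinite (Hs!i \<inter> Hs!Suc i) \<and>
          path_conn (word_dist G S) (carrier G) M (Hs!i \<inter> Hs!Suc i)) \<and> real (length Hs) \<le> D"
begin

abbreviation "G1 \<equiv> generate G (\<Union>HH)"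
abbreviation "LL \<equiv> {g <# H | g H. g \<in> G1 \<and> H \<in> HH}"

definition chain :: "'a \<Rightarrow> real \<Rightarrow> 'a set \<Rightarrow> 'a set \<Rightarrow> bool" where
  "chain x n L L' = (\<exists>Ls. Ls \<noteq> [] \<and> hd Ls = L \<and> last Ls = L' \<and> real (length Ls) \<le> n \<and> set Ls \<subseteq> LL \<and>
     successively (link tau eta x) Ls)"

lemma UH_carrier: "\<Union>HH \<subseteq> carrier G"
proof
  fix x assume "x \<in> \<Union>HH"
  then obtain H where H: "H \<in> HH" "x \<in> H" by blast
  show "x \<in> carrier G" by (rule subgroup.mem_carrier[OF Hsub[OF H(1)] H(2)])
qed

lemma G1_sub: "subgroup G1 G" by (rule generate_is_subgroup[OF UH_carrier])

lemma G1_carrier: "g \<in> G1 \<Longrightarrow> g \<in> carrier G" by (rule subgroup.mem_carrier[OF G1_sub])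

lemma H_G1: "H \<in> HH \<Longrightarrow> H \<subseteq> G1" by (auto intro: generate.incl)

lemma chain_trans: "chain x m L1 L2 \<Longrightarrow> chain x n L2 L3 \<Longrightarrow> chain x (m + n) L1 L3"
proof -
  assume "chain x m L1 L2" "chain x n L2 L3"
  then obtain Ls1 Ls2 where 1: "Ls1 \<noteq> []" "hd Ls1 = L1" "last Ls1 = L2" "real (length Ls1) \<le> m" "set Ls1 \<subseteq> LL"
     "successively (link tau eta x) Ls1"
    and 2: "Ls2 \<noteq> []" "hd Ls2 = L2" "last Ls2 = L3" "real (length Ls2) \<le> n" "set Ls2 \<subseteq> LL"
     "successively (link tau eta x) Ls2"
    unfolding chain_def by blast
  obtain rest where r: "Ls2 = L2 # rest" using 2 by (cases Ls2) auto
  show ?thesis unfolding chain_def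
  proof (intro exI[of _ "Ls1 @ rest"] conjI)
    show "Ls1 @ rest \<noteq> []" using 1 by simp
    show "hd (Ls1 @ rest) = L1" using 1 by simp
    show "last (Ls1 @ rest) = L3" using 1 2 r by (cases "rest = []") auto
    show "real (length (Ls1 @ rest)) \<le> m + n" using 1 2 r by simp
    show "set (Ls1 @ rest) \<subseteq> LL" using 1 2 r by auto
    show "successively (link tau eta x) (Ls1 @ rest)"
      using 1 2 r by (auto simp: successively_append_iff successively_Cons)
  qed
qed

lemma lemmaA:
  assumes c: "c \<in> G1" and x: "x \<in> carrier G" and xc: "d x c < eta" and H: "H \<in> HH" and H': "H' \<in> HH"
  shows "chain x D (c <# H) (c <# H')"
proof -
  obtain Hs where Hs: "Hs \<noteq> []" "hd Hs = H" "last Hs = H'" "set Hs \<subseteq> HH"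
    "\<forall>i. Suc i < length Hs \<longrightarrow> infinite (Hs!i \<inter> Hs!Suc i) \<and> path_conn d (carrier G) M (Hs!i \<inter> Hs!Suc i)"
    "real (length Hs) \<le> D"
    using Dp[OF H H'] by blast
  have cc: "c \<in> carrier G" using G1_carrier c .
  show ?thesis unfolding chain_def
  proof (intro exI[of _ "map (\<lambda>K. c <# K) Hs"] conjI)
    show "map (\<lambda>K. c <# K) Hs \<noteq> []" using Hs by simp
    show "hd (map (\<lambda>K. c <# K) Hs) = c <# H" using Hs by (simp add: hd_map)
    show "last (map (\<lambda>K. c <# K) Hs) = c <# H'" using Hs by (simp add: last_map)
    show "real (length (map (\<lambda>K. c <# K) Hs)) \<le> D" using Hs by simp
    show "set (map (\<lambda>K. c <# K) Hs) \<subseteq> LL" using Hs c by auto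
    show "successively (link tau eta x) (map (\<lambda>K. c <# K) Hs)"
      unfolding succ_nth
    proof (intro allI impI)
      fix i assume i: "Suc i < length (map (\<lambda>K. c <# K) Hs)"
      have mem: "Hs ! i \<in> HH" "Hs ! Suc i \<in> HH" using i Hs(4) nth_mem by (auto simp: subsetD)
      have "link tau eta x (c <# (Hs ! i)) (c <# (Hs ! Suc i))"
        by (rule link_lemma[OF cc x Hsub[OF mem(1)] Hsub[OF mem(2)] _ _ tau Me Re Rp[OF mem] xc])
           (use Hs(5) i in auto)
      then show "link tau eta x (map (\<lambda>K. c <# K) Hs ! i) (map (\<lambda>K. c <# K) Hs ! Suc i)" using i by simp
    qed
  qed
qed

lemma G1_word: "s \<in> G1 \<Longrightarrow> \<exists>ws. set ws \<subseteq> \<Union>HH \<and> gprod ws = s"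
proof (induction rule: generate.induct)
  case one then show ?case by (intro exI[of _ "[]"]) auto
next
  case (incl h) then show ?case using UH_carrier by (intro exI[of _ "[h]"]) auto
next
  case (inv h)
  then obtain H where "H \<in> HH" "h \<in> H" by blast
  then have "inv h \<in> H" using subgroup.m_inv_closed[OF Hsub[OF \<open>H \<in> HH\<close>]] by blast
  then show ?case using \<open>H \<in> HH\<close> UH_carrier by (intro exI[of _ "[inv h]"]) auto
next
  case (eng h1 h2)
  then obtain w1 w2 where "set w1 \<subseteq> \<Union>HH" "gprod w1 = h1" "set w2 \<subseteq> \<Union>HH" "gprod w2 = h2" by blast
  moreover have "set w1 \<subseteq> carrier G" "set w2 \<subseteq> carrier G" using calculation UH_carrier by auto
  ultimately show ?case by (intro exI[of _ "w1 @ w2"]) (auto simp: gprod_append)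
qed

lemma gprod_G1: "set ws \<subseteq> \<Union>HH \<Longrightarrow> gprod ws \<in> G1"
proof (induction ws)
  case Nil then show ?case by (simp add: generate.one)
next
  case (Cons w ws) then show ?case by (simp add: generate.eng generate.incl)
qed

lemma lemmaB:
  "set ws \<subseteq> \<Union>HH \<Longrightarrow> c \<in> G1 \<Longrightarrow> H \<in> HH \<Longrightarrow> H' \<in> HH \<Longrightarrow> x \<in> carrier G \<Longrightarrow>
   (\<forall>k\<le>length ws. d x (c \<otimes> gprod (take k ws)) < eta) \<Longrightarrow>
   chain x ((real (length ws) + 1) * D) (c <# H) ((c \<otimes> gprod ws) <# H')"
proof (induction ws arbitrary: c H)
  case Nil
  then have "d x c < eta" using G1_carrier[of c] by (auto dest: spec[of _ 0])
  then show ?case using lemmaA[OF Nil(2) Nil(5) _ Nil(3) Nil(4)] Nil G1_carrier by simp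
next
  case (Cons w ws)
  obtain K where K: "K \<in> HH" "w \<in> K" using Cons.prems(1) by auto
  have cc: "c \<in> carrier G" using G1_carrier Cons.prems(2) .
  have wc: "w \<in> carrier G" by (rule subgroup.mem_carrier[OF Hsub[OF K(1)] K(2)])
  have wsc: "set ws \<subseteq> carrier G" using Cons.prems(1) UH_carrier by auto
  have "d x c < eta" using Cons.prems(6) cc by (auto dest: spec[of _ 0])
  then have c1: "chain x D (c <# H) (c <# K)" using lemmaA[OF Cons.prems(2) Cons.prems(5) _ Cons.prems(3) K(1)] by simp
  have "c <# K = (c \<otimes> w) <# K"
    by (rule l_repr_independence[OF _ cc Hsub[OF K(1)]]) (use K in \<open>auto simp: lcos_mem\<close>)
  moreover have cw: "c \<otimes> w \<in> G1" using Cons.prems(2) K by (auto intro: generate.eng generate.incl)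
  moreover have "\<forall>k\<le>length ws. d x ((c \<otimes> w) \<otimes> gprod (take k ws)) < eta"
  proof (intro allI impI)
    fix k assume "k \<le> length ws"
    then have "Suc k \<le> length (w # ws)" by simp
    then have "d x (c \<otimes> gprod (take (Suc k) (w # ws))) < eta" using Cons.prems(6) by blast
    moreover have "set (take k ws) \<subseteq> carrier G" using wsc set_take_subset by fast
    ultimately show "d x ((c \<otimes> w) \<otimes> gprod (take k ws)) < eta" using cc wc by (simp add: m_assoc gprod_closed)
  qed
  ultimately have c2: "chain x ((real (length ws) + 1) * D) (c <# K) ((c \<otimes> w \<otimes> gprod ws) <# H')"
    using Cons.IH[of "c \<otimes> w" K] Cons.prems K by simp
  have "c \<otimes> w \<otimes> gprod ws = c \<otimes> gprod (w # ws)" using cc wc wsc by (simp add: m_assoc gprod_closed)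
  then have "chain x (D + (real (length ws) + 1) * D) (c <# H) ((c \<otimes> gprod (w # ws)) <# H')"
    using chain_trans[OF c1 c2] by simp
  then show ?case by (simp add: algebra_simps)
qed

end



context wm begin

lemma wl_prefix: "set xs \<subseteq> carrier G \<Longrightarrow> wl (gprod (take k xs)) \<le> sum_list (map wl xs)"
proof (induction xs arbitrary: k)
  case Nil then show ?case by (simp add: wl_one)
next
  case (Cons a xs)
  show ?case
  proof (cases k)
    case 0 then show ?thesis by (simp add: wl_one)
  next
    case (Suc k')
    have ac: "a \<in> carrier G" "set (take k' xs) \<subseteq> carrier G" using Cons.prems set_take_subset by (auto, fast)
    have "wl (gprod (take k (a # xs))) = wl (a \<otimes> gprod (take k' xs))" using Suc by simp
    also have "\<dots> \<le> wl a + wl (gprod (take k' xs))" using ac by (intro wl_mult gprod_closed) auto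
    also have "\<dots> \<le> wl a + sum_list (map wl xs)" using Cons by simp
    finally show ?thesis by simp
  qed
qed

lemma G1_word_wm:
  assumes Hs: "\<And>H. H \<in> HH \<Longrightarrow> subgroup H G" and s: "s \<in> generate G (\<Union>HH)"
  shows "\<exists>ws. set ws \<subseteq> \<Union>HH \<and> gprod ws = s"
  using s
proof (induction rule: generate.induct)
  case one then show ?case by (intro exI[of _ "[]"]) auto
next
  case (incl h)
  then obtain H where H: "H \<in> HH" "h \<in> H" by blast
  have "h \<in> carrier G" by (rule subgroup.mem_carrier[OF Hs[OF H(1)] H(2)])
  then show ?case using incl by (intro exI[of _ "[h]"]) auto
next
  case (inv h)
  then obtain H where H: "H \<in> HH" "h \<in> H" by blast
  then have "inv h \<in> H" using subgroup.m_inv_closed[OF Hs[OF H(1)]] by blast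
  moreover have "inv h \<in> carrier G" by (rule subgroup.mem_carrier[OF Hs[OF H(1)] calculation])
  ultimately show ?case using H by (intro exI[of _ "[inv h]"]) auto
next
  case (eng h1 h2)
  then obtain w1 w2 where w: "set w1 \<subseteq> \<Union>HH" "gprod w1 = h1" "set w2 \<subseteq> \<Union>HH" "gprod w2 = h2" by blast
  have "\<Union>HH \<subseteq> carrier G"
  proof
    fix x assume "x \<in> \<Union>HH"
    then obtain H where H: "H \<in> HH" "x \<in> H" by blast
    show "x \<in> carrier G" by (rule subgroup.mem_carrier[OF Hs[OF H(1)] H(2)])
  qed
  then have "set w1 \<subseteq> carrier G" "set w2 \<subseteq> carrier G" using w by auto
  then show ?case using w by (intro exI[of _ "w1 @ w2"]) (auto simp: gprod_append)
qed

lemma main: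
  assumes ne: "\<H> \<noteq> {}" and tan: "tight_alg_network G S M \<H>"
  shows "\<exists>tau eta. tau \<ge> 0 \<and> eta \<ge> 0 \<and>
           tight_network (word_dist G S) (carrier G) tau eta
             {g <# H | g H. g \<in> generate G (\<Union>\<H>) \<and> H \<in> \<H>}"
proof -
  define G1 where "G1 = generate G (\<Union>\<H>)"
  have Hq: "\<And>H. H \<in> \<H> \<Longrightarrow> subgroup H G \<and> quasi_convex d (carrier G) M M H"
    using tan unfolding tight_alg_network_def by blast
  have Hsub: "\<And>H. H \<in> \<H> \<Longrightarrow> subgroup H G" using Hq by blast
  have finrc: "finite (rcosets G1)" using tan unfolding tight_alg_network_def G1_def by blast
  have Hch: "\<And>H H'. H \<in> \<H> \<Longrightarrow> H' \<in> \<H> \<Longrightarrow> \<exists>Hs. Hs \<noteq> [] \<and> hd Hs = H \<and> last Hs = H' \<and> set Hs \<subseteq> \<H> \<and>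
        (\<forall>i. Suc i < length Hs \<longrightarrow> infinite (Hs ! i \<inter> Hs ! Suc i) \<and>
           path_conn d (carrier G) M (Hs ! i \<inter> Hs ! Suc i))"
    using tan unfolding tight_alg_network_def by blast
  obtain H0 where H0: "H0 \<in> \<H>" using ne by blast
  have Mpos: "M > 0" using qc_pos[of M M H0 \<one>] Hq[OF H0] subgroup.one_closed[OF Hsub[OF H0]] by blast
  have finH: "finite \<H>" using H_finite[of \<H> M] Hq Mpos by blast
  have UHc: "\<Union>\<H> \<subseteq> carrier G"
  proof
    fix x assume "x \<in> \<Union>\<H>"
    then obtain H where H: "H \<in> \<H>" "x \<in> H" by blast
    show "x \<in> carrier G" by (rule subgroup.mem_carrier[OF Hsub[OF H(1)] H(2)])
  qed
  have G1sub: "subgroup G1 G" unfolding G1_def by (rule generate_is_subgroup[OF UHc])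
  have G1c: "\<And>g. g \<in> G1 \<Longrightarrow> g \<in> carrier G" by (rule subgroup.mem_carrier[OF G1sub])
  have "\<exists>rho. \<forall>C\<in>rcosets G1. \<forall>x\<in>C. \<exists>g\<in>G1. d x g < rho"
  proof (rule uniform_bound[OF finrc])
    show "\<forall>C\<in>rcosets G1. \<exists>B. \<forall>x\<in>C. \<exists>g\<in>G1. d x g < B"
    proof
      fix C assume "C \<in> rcosets G1"
      then obtain a where a: "a \<in> carrier G" "C = G1 #> a" unfolding RCOSETS_def by blast
      have "\<forall>x\<in>C. \<exists>g\<in>G1. d x g < real (wl (inv a)) + 1"
      proof
        fix x assume "x \<in> C"
        then obtain h where h: "h \<in> G1" "x = h \<otimes> a" using a unfolding r_coset_def by blast
        have hc: "h \<in> carrier G" using G1c h by blast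
        have "inv x \<otimes> h = inv a" using h hc a by (simp add: inv_mult_group m_assoc)
        then have "d x h = real (wl (inv a))" by (simp add: d_def')
        then have "d x h < real (wl (inv a)) + 1" by simp
        then show "\<exists>g\<in>G1. d x g < real (wl (inv a)) + 1" using h(1) by blast
      qed
      then show "\<exists>B. \<forall>x\<in>C. \<exists>g\<in>G1. d x g < B" by blast
    qed
  next
    fix C B B' assume "\<forall>x\<in>C. \<exists>g\<in>G1. d x g < B" "B \<le> B'"
    then show "\<forall>x\<in>C. \<exists>g\<in>G1. d x g < B'" by (meson order_less_le_trans)
  qed
  then obtain rho where rho0: "\<forall>C\<in>rcosets G1. \<forall>x\<in>C. \<exists>g\<in>G1. d x g < rho" by blast
  have cover: "\<exists>g\<in>G1. d x g < rho" if x: "x \<in> carrier G" for x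
  proof -
    have "G1 #> x \<in> rcosets G1" unfolding RCOSETS_def using x by blast
    moreover have "x \<in> G1 #> x" unfolding r_coset_def using x subgroup.one_closed[OF G1sub]
      by (intro UN_I[of \<one>]) auto
    ultimately show ?thesis using rho0 by blast
  qed
  define tau where "tau = max M rho"
  have tauM: "M \<le> tau" "rho \<le> tau" "0 < tau" unfolding tau_def using Mpos by auto
  have "\<exists>R. \<forall>HK\<in>\<H> \<times> \<H>. \<forall>p\<in>carrier G. (\<exists>h\<in>fst HK. d p h < tau) \<and> (\<exists>k\<in>snd HK. d p k < tau) \<longrightarrow>
      (\<exists>z\<in>fst HK \<inter> snd HK. d p z < R)"
  proof (rule uniform_bound)
    show "finite (\<H> \<times> \<H>)" using finH by simp
    show "\<forall>HK\<in>\<H> \<times> \<H>. \<exists>R. \<forall>p\<in>carrier G. (\<exists>h\<in>fst HK. d p h < tau) \<and> (\<exists>k\<in>snd HK. d p k < tau) \<longrightarrow>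
      (\<exists>z\<in>fst HK \<inter> snd HK. d p z < R)"
    proof
      fix HK assume "HK \<in> \<H> \<times> \<H>"
      then have "subgroup (fst HK) G" "subgroup (snd HK) G" using Hsub by auto
      then show "\<exists>R. \<forall>p\<in>carrier G. (\<exists>h\<in>fst HK. d p h < tau) \<and> (\<exists>k\<in>snd HK. d p k < tau) \<longrightarrow>
        (\<exists>z\<in>fst HK \<inter> snd HK. d p z < R)" by (rule nbhd_int)
    qed
  next
    fix HK R R' assume "\<forall>p\<in>carrier G. (\<exists>h\<in>fst HK. d p h < tau) \<and> (\<exists>k\<in>snd HK. d p k < tau) \<longrightarrow>
      (\<exists>z\<in>fst HK \<inter> snd HK. d p z < R)" "R \<le> R'"
    then show "\<forall>p\<in>carrier G. (\<exists>h\<in>fst HK. d p h < tau) \<and> (\<exists>k\<in>snd HK. d p k < tau) \<longrightarrow>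
      (\<exists>z\<in>fst HK \<inter> snd HK. d p z < R')" by (meson order_less_le_trans)
  qed
  then obtain R where R0: "\<forall>HK\<in>\<H> \<times> \<H>. \<forall>p\<in>carrier G. (\<exists>h\<in>fst HK. d p h < tau) \<and> (\<exists>k\<in>snd HK. d p k < tau) \<longrightarrow>
      (\<exists>z\<in>fst HK \<inter> snd HK. d p z < R)" by blast
  have Rp: "\<And>H K. H \<in> \<H> \<Longrightarrow> K \<in> \<H> \<Longrightarrow> \<forall>p\<in>carrier G. (\<exists>h\<in>H. d p h < tau) \<and>
       (\<exists>k\<in>K. d p k < tau) \<longrightarrow> (\<exists>z\<in>H\<inter>K. d p z < R)"
  proof -
    fix H K assume "H \<in> \<H>" "K \<in> \<H>"
    then have "(H, K) \<in> \<H> \<times> \<H>" by simp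
    from bspec[OF R0 this] show "\<forall>p\<in>carrier G. (\<exists>h\<in>H. d p h < tau) \<and>
       (\<exists>k\<in>K. d p k < tau) \<longrightarrow> (\<exists>z\<in>H\<inter>K. d p z < R)" by simp
  qed
  define QD where "QD = (\<lambda>HK D. \<exists>Hs. Hs \<noteq> [] \<and> hd Hs = fst HK \<and> last Hs = snd HK \<and> set Hs \<subseteq> \<H> \<and>
       (\<forall>i. Suc i < length Hs \<longrightarrow> infinite (Hs!i \<inter> Hs!Suc i) \<and>
          path_conn d (carrier G) M (Hs!i \<inter> Hs!Suc i)) \<and> real (length Hs) \<le> D)"
  have "\<exists>D. \<forall>HK\<in>\<H> \<times> \<H>. QD HK D"
  proof (rule uniform_bound)
    show "finite (\<H> \<times> \<H>)" using finH by simp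
    show "\<forall>HK\<in>\<H> \<times> \<H>. \<exists>D. QD HK D"
    proof
      fix HK assume "HK \<in> \<H> \<times> \<H>"
      then obtain Hs where "Hs \<noteq> [] \<and> hd Hs = fst HK \<and> last Hs = snd HK \<and> set Hs \<subseteq> \<H> \<and>
        (\<forall>i. Suc i < length Hs \<longrightarrow> infinite (Hs ! i \<inter> Hs ! Suc i) \<and>
           path_conn d (carrier G) M (Hs ! i \<inter> Hs ! Suc i))" using Hch[of "fst HK" "snd HK"] by auto
      then have "QD HK (real (length Hs))" unfolding QD_def by blast
      then show "\<exists>D. QD HK D" by blast
    qed
  next
    fix HK D D' assume "QD HK D" "D \<le> D'"
    then show "QD HK D'" unfolding QD_def by (meson order_trans)
  qed
  then obtain D where D0: "\<forall>HK\<in>\<H> \<times> \<H>. QD HK D" by blast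
  have Dp: "\<And>H H'. H \<in> \<H> \<Longrightarrow> H' \<in> \<H> \<Longrightarrow> \<exists>Hs. Hs \<noteq> [] \<and> hd Hs = H \<and> last Hs = H' \<and> set Hs \<subseteq> \<H> \<and>
       (\<forall>i. Suc i < length Hs \<longrightarrow> infinite (Hs!i \<inter> Hs!Suc i) \<and>
          path_conn d (carrier G) M (Hs!i \<inter> Hs!Suc i)) \<and> real (length Hs) \<le> D"
  proof -
    fix H H' assume "H \<in> \<H>" "H' \<in> \<H>"
    then have "(H, H') \<in> \<H> \<times> \<H>" by simp
    from bspec[OF D0 this] show "\<exists>Hs. Hs \<noteq> [] \<and> hd Hs = H \<and> last Hs = H' \<and> set Hs \<subseteq> \<H> \<and>
       (\<forall>i. Suc i < length Hs \<longrightarrow> infinite (Hs!i \<inter> Hs!Suc i) \<and>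
          path_conn d (carrier G) M (Hs!i \<inter> Hs!Suc i)) \<and> real (length Hs) \<le> D" unfolding QD_def by simp
  qed
  have Dnn: "0 \<le> D"
    using Dp[OF H0 H0] of_nat_0_le_iff order_trans by metis
  define F where "F = G1 \<inter> {s \<in> carrier G. d \<one> s \<le> 6 * tau}"
  have finF: "finite F" unfolding F_def using finite_ball[of \<one> "6 * tau"] by auto
  define QW where "QW = (\<lambda>s W. \<exists>ws. set ws \<subseteq> \<Union>\<H> \<and> gprod ws = s \<and> real (length ws) \<le> W \<and>
        (\<forall>k. real (wl (gprod (take k ws))) \<le> W))"
  have "\<exists>W. \<forall>s\<in>F. QW s W"
  proof (rule uniform_bound[OF finF])
    show "\<forall>s\<in>F. \<exists>W. QW s W"
    proof
      fix s assume "s \<in> F"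
      then have "s \<in> G1" unfolding F_def by blast
      then obtain ws where ws: "set ws \<subseteq> \<Union>\<H>" "gprod ws = s"
        using G1_word_wm[OF Hsub] unfolding G1_def by blast
      have wsc: "set ws \<subseteq> carrier G" using ws UHc by auto
      have "QW s (real (length ws) + real (sum_list (map wl ws)))" unfolding QW_def
      proof (intro exI[of _ ws] conjI allI)
        fix k show "real (wl (gprod (take k ws))) \<le> real (length ws) + real (sum_list (map wl ws))"
          using wl_prefix[OF wsc, of k] by linarith
      qed (use ws in auto)
      then show "\<exists>W. QW s W" by blast
    qed
  next
    fix s W W' assume "QW s W" "W \<le> W'"
    then show "QW s W'" unfolding QW_def by (blast intro: order_trans)
  qed
  then obtain W where W0: "\<forall>s\<in>F. QW s W" by blast
  define eta where "eta = max (max M R) (max (3 * tau + W + 1) ((W + 1) * D))"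
  have etab: "M \<le> eta" "R \<le> eta" "3 * tau + W + 1 \<le> eta" "(W + 1) * D \<le> eta" unfolding eta_def by auto
  have "net2 G S \<H> M tau eta R D"
    unfolding net2_def net2_axioms_def using wm_axioms Hsub tauM etab Rp Dp by blast
  then interpret N: net2 G S \<H> M tau eta R D .
  have Wnn: "0 \<le> W"
  proof -
    have "\<one> \<in> F" unfolding F_def G1_def using tauM by (auto simp: d_self generate.one)
    then have "QW \<one> W" using W0 by blast
    then show ?thesis unfolding QW_def by (metis of_nat_0_le_iff order_trans)
  qed
  let ?LL = "{g <# H | g H. g \<in> generate G (\<Union>\<H>) \<and> H \<in> \<H>}"
  have A1: "\<forall>L\<in>?LL. quasi_convex d (carrier G) tau eta L"
  proof
    fix L assume "L \<in> ?LL"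
    then obtain g H where gH: "L = g <# H" "g \<in> G1" "H \<in> \<H>" unfolding G1_def by blast
    have "quasi_convex d (carrier G) M M H" using Hq[OF gH(3)] by blast
    then show "quasi_convex d (carrier G) tau eta L"
      unfolding gH(1) by (rule qc_coset[OF G1c[OF gH(2)] Hsub[OF gH(3)] _ tauM(1) etab(1)])
  qed
  have A2: "carrier G = (\<Union>L\<in>?LL. nbhd d (carrier G) tau L)"
  proof (rule equalityI)
    show "carrier G \<subseteq> (\<Union>L\<in>?LL. nbhd d (carrier G) tau L)"
    proof
      fix x assume x: "x \<in> carrier G"
      then obtain g where g: "g \<in> G1" "d x g < rho" using cover by blast
      have gc: "g \<in> carrier G" using G1c g by blast
      have "g <# H0 \<in> ?LL" using g H0 unfolding G1_def by blast
      moreover have "x \<in> nbhd d (carrier G) tau (g <# H0)" unfolding nbhd_coset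
        using x g gc tauM subgroup.one_closed[OF Hsub[OF H0]] by (intro conjI bexI[of _ \<one>]) auto
      ultimately show "x \<in> (\<Union>L\<in>?LL. nbhd d (carrier G) tau L)" by blast
    qed
    show "(\<Union>L\<in>?LL. nbhd d (carrier G) tau L) \<subseteq> carrier G" unfolding nbhd_def by auto
  qed
  have A3: "\<forall>L\<in>?LL. \<forall>L'\<in>?LL. \<forall>x\<in>carrier G.
        oball d (carrier G) x (3 * tau) \<inter> L \<noteq> {} \<and> oball d (carrier G) x (3 * tau) \<inter> L' \<noteq> {} \<longrightarrow>
        (\<exists>Ls. Ls \<noteq> [] \<and> hd Ls = L \<and> last Ls = L' \<and> real (length Ls) \<le> eta \<and>
              set Ls \<subseteq> ?LL \<and>
              (\<forall>i. Suc i < length Ls \<longrightarrow>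
                 (let I = nbhd d (carrier G) tau (Ls ! i) \<inter> nbhd d (carrier G) tau (Ls ! Suc i) in
                    infinite_diameter d I \<and> path_conn d (carrier G) eta I \<and>
                    I \<inter> oball d (carrier G) x eta \<noteq> {})))"
  proof (intro ballI impI)
    fix L L' x
    assume L: "L \<in> ?LL" and L': "L' \<in> ?LL" and x: "x \<in> carrier G"
      and P: "oball d (carrier G) x (3 * tau) \<inter> L \<noteq> {} \<and> oball d (carrier G) x (3 * tau) \<inter> L' \<noteq> {}"
    obtain g H where gH: "L = g <# H" "g \<in> G1" "H \<in> \<H>" using L unfolding G1_def by blast
    obtain g' H' where gH': "L' = g' <# H'" "g' \<in> G1" "H' \<in> \<H>" using L' unfolding G1_def by blast
    obtain y where y: "y \<in> carrier G" "d x y < 3 * tau" "y \<in> L" using P unfolding oball_def by blast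
    obtain y' where y': "y' \<in> carrier G" "d x y' < 3 * tau" "y' \<in> L'" using P unfolding oball_def by blast
    have gc: "g \<in> carrier G" "g' \<in> carrier G" using G1c gH gH' by auto
    have yG1: "y \<in> G1"
    proof -
      obtain h where h: "h \<in> H" "y = g \<otimes> h" using y(3) gH(1) lcos_mem by blast
      have "h \<in> G1" unfolding G1_def using h gH(3) by (auto intro: generate.incl)
      then show ?thesis using h gH(2) subgroup.m_closed[OF G1sub] by simp
    qed
    have yG1': "y' \<in> G1"
    proof -
      obtain h where h: "h \<in> H'" "y' = g' \<otimes> h" using y'(3) gH'(1) lcos_mem by blast
      have "h \<in> G1" unfolding G1_def using h gH'(3) by (auto intro: generate.incl)
      then show ?thesis using h gH'(2) subgroup.m_closed[OF G1sub] by simp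
    qed
    have Ly: "L = y <# H" using l_repr_independence[OF _ gc(1) Hsub[OF gH(3)]] y gH by simp
    have Ly': "L' = y' <# H'" using l_repr_independence[OF _ gc(2) Hsub[OF gH'(3)]] y' gH' by simp
    define s where "s = inv y \<otimes> y'"
    have sG1: "s \<in> G1" unfolding s_def
      using yG1 yG1' subgroup.m_closed[OF G1sub] subgroup.m_inv_closed[OF G1sub] by simp
    have ds: "d \<one> s = d y y'" unfolding s_def using y y' by (simp add: d_one_left d_def')
    have "d y y' \<le> d y x + d x y'" using d_tri y y' x by blast
    moreover have "d y x = d x y" using d_sym x y by blast
    ultimately have "d \<one> s \<le> 6 * tau" using ds y y' by linarith
    then have "s \<in> F" unfolding F_def using sG1 G1c by blast
    then obtain ws where ws: "set ws \<subseteq> \<Union>\<H>" "gprod ws = s" "real (length ws) \<le> W"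
        "\<forall>k. real (wl (gprod (take k ws))) \<le> W"
      using W0 unfolding QW_def by blast
    have wsc: "set ws \<subseteq> carrier G" using ws UHc by auto
    have pref: "\<forall>k\<le>length ws. d x (y \<otimes> gprod (take k ws)) < eta"
    proof (intro allI impI)
      fix k
      have pc: "gprod (take k ws) \<in> carrier G" using wsc set_take_subset by (intro gprod_closed) fast
      have "d x (y \<otimes> gprod (take k ws)) \<le> d x y + d y (y \<otimes> gprod (take k ws))"
        using d_tri x y pc by blast
      moreover have "d y (y \<otimes> gprod (take k ws)) = d (y \<otimes> \<one>) (y \<otimes> gprod (take k ws))" using y by simp
      moreover have "\<dots> = d \<one> (gprod (take k ws))" using y pc by (intro d_transl) auto
      moreover have "\<dots> = real (wl (gprod (take k ws)))" using pc by (simp add: d_one_left)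
      ultimately show "d x (y \<otimes> gprod (take k ws)) < eta" using ws(4) y(2) etab by smt
    qed
    have "N.chain x ((real (length ws) + 1) * D) (y <# H) ((y \<otimes> gprod ws) <# H')"
      by (rule N.lemmaB[OF ws(1) yG1[unfolded G1_def] gH(3) gH'(3) x pref])
    moreover have "y \<otimes> gprod ws = y'" using ws(2) y y' unfolding s_def by (simp add: m_assoc[symmetric])
    moreover have "(real (length ws) + 1) * D \<le> eta"
    proof -
      have "(real (length ws) + 1) * D \<le> (W + 1) * D" using ws(3) Dnn by (intro mult_right_mono) auto
      then show ?thesis using etab by linarith
    qed
    ultimately obtain Ls where Ls: "Ls \<noteq> []" "hd Ls = L" "last Ls = L'" "real (length Ls) \<le> eta"
      "set Ls \<subseteq> ?LL" "successively (link tau eta x) Ls"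
      unfolding N.chain_def Ly Ly' by (meson order_trans)
    show "\<exists>Ls. Ls \<noteq> [] \<and> hd Ls = L \<and> last Ls = L' \<and> real (length Ls) \<le> eta \<and>
              set Ls \<subseteq> ?LL \<and>
              (\<forall>i. Suc i < length Ls \<longrightarrow>
                 (let I = nbhd d (carrier G) tau (Ls ! i) \<inter> nbhd d (carrier G) tau (Ls ! Suc i) in
                    infinite_diameter d I \<and> path_conn d (carrier G) eta I \<and>
                    I \<inter> oball d (carrier G) x eta \<noteq> {}))"
      using Ls unfolding succ_nth link_def by blast
  qed
  show ?thesis
  proof (rule exI[of _ tau], rule exI[of _ eta], intro conjI)
    show "tau \<ge> 0" using tauM by simp
    show "eta \<ge> 0" using etab Mpos by linarith
    show "tight_network d (carrier G) tau eta ?LL"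
      unfolding tight_network_def using A1 A2 A3 by blast
  qed
qed

end

theorem proposition4p3:
  fixes G :: "('a, 'b) monoid_scheme" and S :: "'a set" and \<H> :: "'a set set"
  assumes "group G"
    and "finite S" and "S \<subseteq> carrier G" and "generate G S = carrier G"
    and "\<H> \<noteq> {}"
    and "\<exists>M. tight_alg_network G S M \<H>"
  shows "\<exists>tau eta. tau \<ge> 0 \<and> eta \<ge> 0 \<and>
           tight_network (word_dist G S) (carrier G) tau eta
             {g <#\<^bsub>G\<^esub> H | g H. g \<in> generate G (\<Union>\<H>) \<and> H \<in> \<H>}"
proof -
  have "wm G S" unfolding wm_def wm_axioms_def using assms by auto
  moreover obtain M where "tight_alg_network G S M \<H>" using assms(6) by blast
  ultimately show ?thesis using wm.main[of G S \<H> M] assms(5) by blast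
qed



end
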